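(* Let $F$ be the free group on the totally ordered set $X=\{x_1<\dots<x_m\}$, and let $n\ge1$, $c\ge1$ with $c\ge n-1$. Let $$W=\{[b,a]:\ b,a \text{ basic commutators on } X,\ b>a,\ wt(b)\ge c+n+1,\ wt(a)\ge c+1,\ wt(b)+wt(a)\le 2c+2n+1\}.$$ Then $$[\gamma_{c+n+1}(F),\gamma_{c+1}(F)]\,\gamma_{2c+2n+2}(F)=\langle W\rangle\,\gamma_{2c+2n+2}(F),$$ i.e. $[\gamma_{c+n+1}(F),\gamma_{c+1}(F)]\equiv\langle W\rangle \pmod{\gamma_{2c+2n+2}(F)}$.
   Context: $\gamma_k(F)$ is the $k$-th term of the lower central series of $F$. Basic commutators on a totally ordered set $X$ of free generators are defined inductively with their weights $wt$: the elements of $X$ are the basic commutators of weight 1, ordered as in $X$. Assuming basic commutators of weight $<k$ have been defined and ordered, a commutator $[b,a]$ is a basic commutator of weight $k$ if $b,a$ are basic commutators with $wt(a)+wt(b)=k$, $b>a$, and, if $b=[b_1,b_2]$ (with $b_1,b_2$ basic), then $b_2\le a$. The ordering is then extended to weight $k$ so that all basic commutators of smaller weight precede those of weight $k$. *)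

theory Defs
  imports "HOL-Algebra.Algebra"
begin

definition gcomm :: "('g, 'b) monoid_scheme \<Rightarrow> 'g \<Rightarrow> 'g \<Rightarrow> 'g" where
  "gcomm G a b = inv\<^bsub>G\<^esub> a \<otimes>\<^bsub>G\<^esub> inv\<^bsub>G\<^esub> b \<otimes>\<^bsub>G\<^esub> a \<otimes>\<^bsub>G\<^esub> b"

definition comm_subgroup :: "('g, 'b) monoid_scheme \<Rightarrow> 'g set \<Rightarrow> 'g set \<Rightarrow> 'g set" where
  "comm_subgroup G H K = generate G {gcomm G h k | h k. h \<in> H \<and> k \<in> K}"

primrec lcs :: "('g, 'b) monoid_scheme \<Rightarrow> nat \<Rightarrow> 'g set" where
  "lcs G 0 = carrier G"
| "lcs G (Suc k) = comm_subgroup G (lcs G k) (carrier G)"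

text \<open>gamma G k is the k-th term of the lower central series (gamma G 1 = G), for k >= 1.\<close>
definition gamma :: "('g, 'b) monoid_scheme \<Rightarrow> nat \<Rightarrow> 'g set" where
  "gamma G k = lcs G (k - 1)"

text \<open>Free groups: G is freely generated by x 0, ..., x (m-1).
  Words are lists of (index, exponent sign); True = x_i, False = x_i^-1.\<close>
definition reduced_word :: "nat \<Rightarrow> (nat \<times> bool) list \<Rightarrow> bool" where
  "reduced_word m w \<longleftrightarrow> (\<forall>p \<in> set w. fst p < m) \<and>
     (\<forall>i. Suc i < length w \<longrightarrow> \<not> (fst (w ! i) = fst (w ! Suc i) \<and> snd (w ! i) \<noteq> snd (w ! Suc i)))"

fun word_eval :: "('g, 'b) monoid_scheme \<Rightarrow> (nat \<Rightarrow> 'g) \<Rightarrow> (nat \<times> bool) list \<Rightarrow> 'g" where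
  "word_eval G x [] = \<one>\<^bsub>G\<^esub>"
| "word_eval G x (p # w) =
     (if snd p then x (fst p) else inv\<^bsub>G\<^esub> (x (fst p))) \<otimes>\<^bsub>G\<^esub> word_eval G x w"

definition free_group_on :: "('g, 'b) monoid_scheme \<Rightarrow> (nat \<Rightarrow> 'g) \<Rightarrow> nat \<Rightarrow> bool" where
  "free_group_on G x m \<longleftrightarrow> group G \<and> x ` {..<m} \<subseteq> carrier G \<and>
     generate G (x ` {..<m}) = carrier G \<and>
     (\<forall>w. reduced_word m w \<and> w \<noteq> [] \<longrightarrow> word_eval G x w \<noteq> \<one>\<^bsub>G\<^esub>)"

datatype fcomm = Gen nat | Br fcomm fcomm

fun wt :: "fcomm \<Rightarrow> nat" where
  "wt (Gen i) = 1"
| "wt (Br b a) = wt b + wt a"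

fun fc_eval :: "('g, 'b) monoid_scheme \<Rightarrow> (nat \<Rightarrow> 'g) \<Rightarrow> fcomm \<Rightarrow> 'g" where
  "fc_eval G x (Gen i) = x i"
| "fc_eval G x (Br b a) = gcomm G (fc_eval G x b) (fc_eval G x a)"

definition admissible_order :: "nat \<Rightarrow> (fcomm \<Rightarrow> fcomm \<Rightarrow> bool) \<Rightarrow> bool" where
  "admissible_order m lt \<longleftrightarrow>
     (\<forall>a. \<not> lt a a) \<and> (\<forall>a b c. lt a b \<longrightarrow> lt b c \<longrightarrow> lt a c) \<and>
     (\<forall>a b. lt a b \<or> a = b \<or> lt b a) \<and>
     (\<forall>i j. i < m \<longrightarrow> j < m \<longrightarrow> (lt (Gen i) (Gen j) \<longleftrightarrow> i < j)) \<and>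
     (\<forall>a b. wt a < wt b \<longrightarrow> lt a b)"

inductive basic :: "nat \<Rightarrow> (fcomm \<Rightarrow> fcomm \<Rightarrow> bool) \<Rightarrow> fcomm \<Rightarrow> bool"
  for m lt where
  gen: "i < m \<Longrightarrow> basic m lt (Gen i)"
| br: "basic m lt b \<Longrightarrow> basic m lt a \<Longrightarrow> lt a b \<Longrightarrow>
       (\<forall>b1 b2. b = Br b1 b2 \<longrightarrow> (lt b2 a \<or> b2 = a)) \<Longrightarrow> basic m lt (Br b a)"

end

theory Submission
  imports Defs
begin


context group begin

lemma cancel_l [simp]: "x \<in> carrier G \<Longrightarrow> y \<in> carrier G \<Longrightarrow> x \<otimes> (inv x \<otimes> y) = y"
  by (simp add: m_assoc[symmetric])
lemma cancel_l2 [simp]: "x \<in> carrier G \<Longrightarrow> y \<in> carrier G \<Longrightarrow> inv x \<otimes> (x \<otimes> y) = y"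
  by (simp add: m_assoc[symmetric])

lemma gcomm_closed [simp]: "a \<in> carrier G \<Longrightarrow> b \<in> carrier G \<Longrightarrow> gcomm G a b \<in> carrier G"
  by (simp add: gcomm_def)

lemma gcomm_inv: "a \<in> carrier G \<Longrightarrow> b \<in> carrier G \<Longrightarrow> inv (gcomm G a b) = gcomm G b a"
  by (simp add: gcomm_def m_assoc inv_mult_group)

lemma gcomm_self: "a \<in> carrier G \<Longrightarrow> gcomm G a a = \<one>"
  by (simp add: gcomm_def m_assoc)

lemma gcomm_one_r: "a \<in> carrier G \<Longrightarrow> gcomm G a \<one> = \<one>"
  by (simp add: gcomm_def m_assoc)

lemma gcomm_mult_l: "a \<in> carrier G \<Longrightarrow> b \<in> carrier G \<Longrightarrow> c \<in> carrier G \<Longrightarrow>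
  gcomm G (a \<otimes> b) c = (inv b \<otimes> gcomm G a c \<otimes> b) \<otimes> gcomm G b c"
  by (simp add: gcomm_def m_assoc inv_mult_group)

lemma gcomm_mult_r: "a \<in> carrier G \<Longrightarrow> b \<in> carrier G \<Longrightarrow> c \<in> carrier G \<Longrightarrow>
  gcomm G a (b \<otimes> c) = gcomm G a c \<otimes> (inv c \<otimes> gcomm G a b \<otimes> c)"
  by (simp add: gcomm_def m_assoc inv_mult_group)

lemma conj_eq: "u \<in> carrier G \<Longrightarrow> g \<in> carrier G \<Longrightarrow> inv g \<otimes> u \<otimes> g = u \<otimes> gcomm G u g"
  by (simp add: gcomm_def m_assoc)

lemma gcomm_inv_l: "a \<in> carrier G \<Longrightarrow> c \<in> carrier G \<Longrightarrow>
  gcomm G (inv a) c = a \<otimes> inv (gcomm G a c) \<otimes> inv a"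
  by (simp add: gcomm_def m_assoc inv_mult_group)

lemma gcomm_inv_r: "a \<in> carrier G \<Longrightarrow> c \<in> carrier G \<Longrightarrow>
  gcomm G a (inv c) = c \<otimes> inv (gcomm G a c) \<otimes> inv c"
  by (simp add: gcomm_def m_assoc inv_mult_group)

lemma gcomm_conj: "a \<in> carrier G \<Longrightarrow> b \<in> carrier G \<Longrightarrow> g \<in> carrier G \<Longrightarrow>
  g \<otimes> gcomm G a b \<otimes> inv g = gcomm G (g \<otimes> a \<otimes> inv g) (g \<otimes> b \<otimes> inv g)"
  by (simp add: gcomm_def m_assoc inv_mult_group)

lemma hall_witt: "x \<in> carrier G \<Longrightarrow> y \<in> carrier G \<Longrightarrow> z \<in> carrier G \<Longrightarrow>
  gcomm G (gcomm G x y) (inv x \<otimes> z \<otimes> x) \<otimes> gcomm G (gcomm G z x) (inv z \<otimes> y \<otimes> z)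
   \<otimes> gcomm G (gcomm G y z) (inv y \<otimes> x \<otimes> y) = \<one>"
  by (simp add: gcomm_def m_assoc inv_mult_group)

end


context group begin

lemma gcomm_one_l: "a \<in> carrier G \<Longrightarrow> gcomm G \<one> a = \<one>"
  by (simp add: gcomm_def m_assoc)

lemma comm_gens_sub: assumes "H \<subseteq> carrier G" "K \<subseteq> carrier G"
  shows "{gcomm G h k |h k. h \<in> H \<and> k \<in> K} \<subseteq> carrier G"
proof safe
  fix h k assume "h \<in> H" "k \<in> K" then show "gcomm G h k \<in> carrier G" using assms gcomm_closed by blast
qed

lemma comm_subgroup_sub: assumes "H \<subseteq> carrier G" "K \<subseteq> carrier G" shows "comm_subgroup G H K \<subseteq> carrier G"
  unfolding comm_subgroup_def
proof (rule generate_incl, safe)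
  fix h k assume "h \<in> H" "k \<in> K" then show "gcomm G h k \<in> carrier G" using assms gcomm_closed by blast
qed

lemma comm_subgroup_subgroup: "H \<subseteq> carrier G \<Longrightarrow> K \<subseteq> carrier G \<Longrightarrow> subgroup (comm_subgroup G H K) G"
  unfolding comm_subgroup_def by (rule generate_is_subgroup[OF comm_gens_sub])

lemma comm_subgroup_incl: "h \<in> H \<Longrightarrow> k \<in> K \<Longrightarrow> gcomm G h k \<in> comm_subgroup G H K"
  unfolding comm_subgroup_def by (rule generate.incl) auto

lemma lcs_sub: "lcs G k \<subseteq> carrier G"
  proof (induction k)
  case (Suc k) then show ?case using comm_subgroup_sub[of "lcs G k" "carrier G"] by simp
qed simp

lemma lcs_normal: "lcs G k \<lhd> G"
proof (induction k)
  case 0 then show ?case by (simp add: normal_self)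
next
  case (Suc k)
  have sub: "{gcomm G h k' |h k'. h \<in> lcs G k \<and> k' \<in> carrier G} \<subseteq> carrier G"
    by (rule comm_gens_sub[OF lcs_sub order_refl])
  show ?case unfolding lcs.simps comm_subgroup_def
  proof (rule normal_generateI[OF sub])
    fix h g assume h: "h \<in> {gcomm G h k' |h k'. h \<in> lcs G k \<and> k' \<in> carrier G}" and g: "g \<in> carrier G"
    from h obtain a b where ab: "h = gcomm G a b" "a \<in> lcs G k" "b \<in> carrier G" by auto
    have a: "a \<in> carrier G" using ab lcs_sub by blast
    have "g \<otimes> h \<otimes> inv g = gcomm G (g \<otimes> a \<otimes> inv g) (g \<otimes> b \<otimes> inv g)"
      unfolding ab(1) by (rule gcomm_conj[OF a ab(3) g])
    moreover have "g \<otimes> a \<otimes> inv g \<in> lcs G k" by (rule normal.inv_op_closed2[OF Suc.IH g ab(2)])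
    moreover have "g \<otimes> b \<otimes> inv g \<in> carrier G" using ab g by simp
    ultimately show "g \<otimes> h \<otimes> inv g \<in> {gcomm G h k' |h k'. h \<in> lcs G k \<and> k' \<in> carrier G}" by auto
  qed
qed

lemma lcs_subgroup: "subgroup (lcs G k) G"
  using lcs_normal normal_imp_subgroup by blast

lemma lcs_inv: "x \<in> lcs G i \<Longrightarrow> inv x \<in> lcs G i"
  by (rule subgroup.m_inv_closed[OF lcs_subgroup])

lemma lcs_mult: "x \<in> lcs G i \<Longrightarrow> y \<in> lcs G i \<Longrightarrow> x \<otimes> y \<in> lcs G i"
  by (rule subgroup.m_closed[OF lcs_subgroup])

lemma lcs_carrier: "x \<in> lcs G k \<Longrightarrow> x \<in> carrier G"
  using lcs_sub by blast

lemma gcomm_lcs_Suc: "h \<in> lcs G k \<Longrightarrow> g \<in> carrier G \<Longrightarrow> gcomm G h g \<in> lcs G (Suc k)"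
  by (simp add: comm_subgroup_incl)

lemma gcomm_lcs_Suc': "h \<in> lcs G k \<Longrightarrow> g \<in> carrier G \<Longrightarrow> gcomm G g h \<in> lcs G (Suc k)"
proof -
  assume h: "h \<in> lcs G k" and g: "g \<in> carrier G"
  have "inv (gcomm G h g) \<in> lcs G (Suc k)"
    using subgroup.m_inv_closed[OF lcs_subgroup] gcomm_lcs_Suc[OF h g] by blast
  then show ?thesis using gcomm_inv h g lcs_carrier by simp
qed

lemma lcs_Suc_sub: "lcs G (Suc k) \<subseteq> lcs G k"
  unfolding lcs.simps comm_subgroup_def
proof (rule generate_subgroup_incl[OF _ lcs_subgroup], safe)
  fix h g assume h: "h \<in> lcs G k" and g: "g \<in> carrier G"
  have hc: "h \<in> carrier G" using h lcs_carrier by blast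
  have "gcomm G h g = inv h \<otimes> (inv g \<otimes> h \<otimes> g)" using hc g by (simp add: gcomm_def m_assoc)
  moreover have "inv g \<otimes> h \<otimes> g \<in> lcs G k" using normal.inv_op_closed1[OF lcs_normal g h] .
  moreover have "inv h \<in> lcs G k" using subgroup.m_inv_closed[OF lcs_subgroup h] .
  ultimately show "gcomm G h g \<in> lcs G k" using subgroup.m_closed[OF lcs_subgroup] by simp
qed

lemma lcs_anti: "i \<le> j \<Longrightarrow> lcs G j \<subseteq> lcs G i"
  by (induction j rule: dec_induct) (use lcs_Suc_sub in blast)+

lemma comm_right_subgroup:
  assumes N: "N \<lhd> G" and XX: "XX \<subseteq> carrier G"
  shows "subgroup {y \<in> carrier G. \<forall>x\<in>XX. gcomm G x y \<in> N} G"
proof (rule subgroup.intro)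
  show "{y \<in> carrier G. \<forall>x\<in>XX. gcomm G x y \<in> N} \<subseteq> carrier G" by blast
next
  fix b c assume b: "b \<in> {y \<in> carrier G. \<forall>x\<in>XX. gcomm G x y \<in> N}" and c: "c \<in> {y \<in> carrier G. \<forall>x\<in>XX. gcomm G x y \<in> N}"
  show "b \<otimes> c \<in> {y \<in> carrier G. \<forall>x\<in>XX. gcomm G x y \<in> N}"
  proof (safe)
    show "b \<otimes> c \<in> carrier G" using b c by simp
    fix x assume x: "x \<in> XX"
    have xc: "x \<in> carrier G" using x XX by blast
    have "gcomm G x (b \<otimes> c) = gcomm G x c \<otimes> (inv c \<otimes> gcomm G x b \<otimes> c)"
      using gcomm_mult_r xc b c by simp
    moreover have "inv c \<otimes> gcomm G x b \<otimes> c \<in> N" using normal.inv_op_closed1[OF N] b c x by blast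
    ultimately show "gcomm G x (b \<otimes> c) \<in> N" using subgroup.m_closed[OF normal_imp_subgroup[OF N]] c x by simp
  qed
next
  show "\<one> \<in> {y \<in> carrier G. \<forall>x\<in>XX. gcomm G x y \<in> N}"
    using XX gcomm_one_r subgroup.one_closed[OF normal_imp_subgroup[OF N]] by auto
next
  fix c assume c: "c \<in> {y \<in> carrier G. \<forall>x\<in>XX. gcomm G x y \<in> N}"
  show "inv c \<in> {y \<in> carrier G. \<forall>x\<in>XX. gcomm G x y \<in> N}"
  proof safe
    show "inv c \<in> carrier G" using c by simp
    fix x assume x: "x \<in> XX"
    have xc: "x \<in> carrier G" using x XX by blast
    have "inv (gcomm G x c) \<in> N" using c x subgroup.m_inv_closed[OF normal_imp_subgroup[OF N]] by blast
    then have "c \<otimes> inv (gcomm G x c) \<otimes> inv c \<in> N" using normal.inv_op_closed2[OF N] c by blast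
    then show "gcomm G x (inv c) \<in> N" using gcomm_inv_r xc c by simp
  qed
qed

lemma comm_left_subgroup:
  assumes N: "N \<lhd> G" and YY: "YY \<subseteq> carrier G"
  shows "subgroup {x \<in> carrier G. \<forall>y\<in>YY. gcomm G x y \<in> N} G"
proof (rule subgroup.intro)
  show "{x \<in> carrier G. \<forall>y\<in>YY. gcomm G x y \<in> N} \<subseteq> carrier G" by blast
next
  fix a b assume a: "a \<in> {x \<in> carrier G. \<forall>y\<in>YY. gcomm G x y \<in> N}" and b: "b \<in> {x \<in> carrier G. \<forall>y\<in>YY. gcomm G x y \<in> N}"
  show "a \<otimes> b \<in> {x \<in> carrier G. \<forall>y\<in>YY. gcomm G x y \<in> N}"
  proof (safe)
    show "a \<otimes> b \<in> carrier G" using a b by simp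
    fix y assume y: "y \<in> YY"
    have yc: "y \<in> carrier G" using y YY by blast
    have "gcomm G (a \<otimes> b) y = (inv b \<otimes> gcomm G a y \<otimes> b) \<otimes> gcomm G b y"
      using gcomm_mult_l yc a b by simp
    moreover have "inv b \<otimes> gcomm G a y \<otimes> b \<in> N" using normal.inv_op_closed1[OF N] a b y by blast
    ultimately show "gcomm G (a \<otimes> b) y \<in> N" using subgroup.m_closed[OF normal_imp_subgroup[OF N]] b y by simp
  qed
next
  show "\<one> \<in> {x \<in> carrier G. \<forall>y\<in>YY. gcomm G x y \<in> N}"
    using YY gcomm_one_l subgroup.one_closed[OF normal_imp_subgroup[OF N]] by auto
next
  fix a assume a: "a \<in> {x \<in> carrier G. \<forall>y\<in>YY. gcomm G x y \<in> N}"
  show "inv a \<in> {x \<in> carrier G. \<forall>y\<in>YY. gcomm G x y \<in> N}"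
  proof safe
    show "inv a \<in> carrier G" using a by simp
    fix y assume y: "y \<in> YY"
    have yc: "y \<in> carrier G" using y YY by blast
    have "inv (gcomm G a y) \<in> N" using a y subgroup.m_inv_closed[OF normal_imp_subgroup[OF N]] by blast
    then have "a \<otimes> inv (gcomm G a y) \<otimes> inv a \<in> N" using normal.inv_op_closed2[OF N] a by blast
    then show "gcomm G (inv a) y \<in> N" using gcomm_inv_l yc a by simp
  qed
qed

lemma comm_lcs: "x \<in> lcs G i \<Longrightarrow> y \<in> lcs G j \<Longrightarrow> gcomm G x y \<in> lcs G (i + j + 1)"
proof (induction j arbitrary: i x y)
  case 0 then show ?case using gcomm_lcs_Suc lcs_carrier by simp
next
  case (Suc j)
  let ?N = "lcs G (i + Suc j + 1)"
  let ?S = "{y \<in> carrier G. \<forall>x\<in>lcs G i. gcomm G x y \<in> ?N}"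
  have "lcs G (Suc j) \<subseteq> ?S"
    unfolding lcs.simps comm_subgroup_def
  proof (rule generate_subgroup_incl[OF _ comm_right_subgroup[OF lcs_normal lcs_sub]], safe)
    fix u g assume u: "u \<in> lcs G j" and g: "g \<in> carrier G"
    have uc: "u \<in> carrier G" using u lcs_carrier by blast
    show "gcomm G u g \<in> carrier G" using uc g by simp
    fix x assume x: "x \<in> lcs G i"
    have xc: "x \<in> carrier G" using x lcs_carrier by blast
    define c where "c = u \<otimes> x \<otimes> inv u"
    have cc: "c \<in> carrier G" using c_def uc xc by simp
    have c: "c \<in> lcs G i" using normal.inv_op_closed2[OF lcs_normal uc x] c_def by simp
    have xe: "inv u \<otimes> c \<otimes> u = x" using uc xc by (simp add: c_def m_assoc)
    have hw: "gcomm G (gcomm G u g) x \<otimes> gcomm G (gcomm G c u) (inv c \<otimes> g \<otimes> c)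
       \<otimes> gcomm G (gcomm G g c) (inv g \<otimes> u \<otimes> g) = \<one>"
      using hall_witt[OF uc g cc] unfolding xe .
    have t2: "gcomm G (gcomm G c u) (inv c \<otimes> g \<otimes> c) \<in> ?N"
    proof -
      have "gcomm G c u \<in> lcs G (i + j + 1)" using Suc.IH[OF c u] .
      then show ?thesis using gcomm_lcs_Suc[of _ "i+j+1"] cc g by simp
    qed
    have t3: "gcomm G (gcomm G g c) (inv g \<otimes> u \<otimes> g) \<in> ?N"
    proof -
      have "gcomm G g c \<in> lcs G (Suc i)" using gcomm_lcs_Suc'[OF c g] .
      moreover have "inv g \<otimes> u \<otimes> g \<in> lcs G j" using normal.inv_op_closed1[OF lcs_normal g u] .
      ultimately have "gcomm G (gcomm G g c) (inv g \<otimes> u \<otimes> g) \<in> lcs G (Suc i + j + 1)" by (rule Suc.IH)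
      then show ?thesis by simp
    qed
    let ?A = "gcomm G (gcomm G u g) x"
    let ?B = "gcomm G (gcomm G c u) (inv c \<otimes> g \<otimes> c)"
    let ?C = "gcomm G (gcomm G g c) (inv g \<otimes> u \<otimes> g)"
    have Ac: "?A \<in> carrier G" "?B \<in> carrier G" "?C \<in> carrier G" using uc g xc cc by simp_all
    have "?A \<otimes> (?B \<otimes> ?C) = \<one>" using hw Ac by (simp add: m_assoc)
    then have "?A = inv (?B \<otimes> ?C)" using Ac by (simp add: inv_equality)
    moreover have "inv (?B \<otimes> ?C) \<in> ?N" using lcs_inv[OF lcs_mult[OF t2 t3]] .
    ultimately have "?A \<in> ?N" by simp
    then have "inv ?A \<in> ?N" by (rule lcs_inv)
    then show "gcomm G x (gcomm G u g) \<in> ?N" using gcomm_inv xc uc g by simp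
  qed
  then show ?case using Suc.prems by blast
qed

end


definition md :: "('g, 'b) monoid_scheme \<Rightarrow> 'g set \<Rightarrow> 'g \<Rightarrow> 'g \<Rightarrow> bool" where
  "md G N a b \<longleftrightarrow> a \<in> carrier G \<and> b \<in> carrier G \<and> a \<otimes>\<^bsub>G\<^esub> inv\<^bsub>G\<^esub> b \<in> N"

context group begin

lemma md_refl: "N \<lhd> G \<Longrightarrow> a \<in> carrier G \<Longrightarrow> md G N a a"
  by (simp add: md_def normal_imp_subgroup subgroup.one_closed)

lemma md_sym: assumes N: "N \<lhd> G" and ab: "md G N a b" shows "md G N b a"
proof -
  have c: "a \<in> carrier G" "b \<in> carrier G" "a \<otimes> inv b \<in> N" using ab by (auto simp: md_def)
  have "inv (a \<otimes> inv b) \<in> N" by (rule subgroup.m_inv_closed[OF normal_imp_subgroup[OF N] c(3)])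
  then show ?thesis using c by (simp add: md_def inv_mult_group)
qed

lemma md_trans: assumes N: "N \<lhd> G" and ab: "md G N a b" and bc: "md G N b c" shows "md G N a c"
proof -
  have c1: "a \<in> carrier G" "b \<in> carrier G" "a \<otimes> inv b \<in> N" using ab by (auto simp: md_def)
  have c2: "c \<in> carrier G" "b \<otimes> inv c \<in> N" using bc by (auto simp: md_def)
  have "(a \<otimes> inv b) \<otimes> (b \<otimes> inv c) \<in> N" by (rule subgroup.m_closed[OF normal_imp_subgroup[OF N] c1(3) c2(2)])
  then show ?thesis using c1 c2 by (simp add: md_def m_assoc)
qed

lemma md_mult: assumes N: "N \<lhd> G" and ab: "md G N a a'" and bb: "md G N b b'" shows "md G N (a \<otimes> b) (a' \<otimes> b')"
proof -
  have c: "a \<in> carrier G" "a' \<in> carrier G" "b \<in> carrier G" "b' \<in> carrier G" "a \<otimes> inv a' \<in> N" "b \<otimes> inv b' \<in> N"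
    using ab bb by (auto simp: md_def)
  have "a \<otimes> (b \<otimes> inv b') \<otimes> inv a \<in> N" by (rule normal.inv_op_closed2[OF N c(1) c(6)])
  then have "(a \<otimes> (b \<otimes> inv b') \<otimes> inv a) \<otimes> (a \<otimes> inv a') \<in> N"
    using subgroup.m_closed[OF normal_imp_subgroup[OF N] _ c(5)] by blast
  then show ?thesis using c by (simp add: md_def m_assoc inv_mult_group)
qed

lemma md_inv: assumes N: "N \<lhd> G" and ab: "md G N a a'" shows "md G N (inv a) (inv a')"
proof -
  have c: "a \<in> carrier G" "a' \<in> carrier G" "a \<otimes> inv a' \<in> N" using ab by (auto simp: md_def)
  have "inv (a \<otimes> inv a') \<in> N" by (rule subgroup.m_inv_closed[OF normal_imp_subgroup[OF N] c(3)])
  then have "a' \<otimes> inv a \<in> N" using c by (simp add: inv_mult_group)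
  then have "inv a \<otimes> (a' \<otimes> inv a) \<otimes> a \<in> N" by (rule normal.inv_op_closed1[OF N c(1)])
  then show ?thesis using c by (simp add: md_def m_assoc)
qed

lemma md_N: assumes "N \<lhd> G" "n \<in> N" shows "md G N n \<one>"
proof -
  have "n \<in> carrier G" using subgroup.mem_carrier[OF normal_imp_subgroup[OF assms(1)] assms(2)] .
  then show ?thesis using assms by (simp add: md_def)
qed

lemma md_V: assumes "subgroup V G" "N \<subseteq> V" "md G N a b" "b \<in> V" shows "a \<in> V"
proof -
  have c: "a \<in> carrier G" "b \<in> carrier G" using assms(3) by (auto simp: md_def)
  have "a \<otimes> inv b \<in> V" using assms(2,3) by (auto simp: md_def)
  then have "(a \<otimes> inv b) \<otimes> b \<in> V" using assms(4) subgroup.m_closed[OF assms(1)] by blast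
  then show ?thesis using c by (simp add: m_assoc)
qed

lemma md_conj: assumes N: "N \<lhd> G" and c: "e \<in> carrier G" "t \<in> carrier G" and h: "gcomm G e t \<in> N"
  shows "md G N (inv t \<otimes> e \<otimes> t) e"
proof -
  have "e \<otimes> gcomm G e t \<otimes> inv e \<in> N" by (rule normal.inv_op_closed2[OF N c(1) h])
  then show ?thesis using c conj_eq[OF c] by (simp add: md_def m_assoc)
qed

lemma md_conj': "N \<lhd> G \<Longrightarrow> e \<in> carrier G \<Longrightarrow> t \<in> carrier G \<Longrightarrow> gcomm G e (inv t) \<in> N \<Longrightarrow> md G N (t \<otimes> e \<otimes> inv t) e"
  using md_conj[of N e "inv t"] by simp

lemma comm_conj_arg:
  assumes c: "e \<in> carrier G" "z \<in> carrier G" "w \<in> carrier G"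
  shows "gcomm G e (inv w \<otimes> z \<otimes> w) = gcomm G e (gcomm G z w) \<otimes> (inv (gcomm G z w) \<otimes> gcomm G e z \<otimes> gcomm G z w)"
proof -
  have "inv w \<otimes> z \<otimes> w = z \<otimes> gcomm G z w" using conj_eq c by simp
  then show ?thesis using gcomm_mult_r c by simp
qed

lemma md_comm_conj_arg:
  assumes N: "N \<lhd> G" and c: "e \<in> carrier G" "z \<in> carrier G" "w \<in> carrier G"
    and h1: "gcomm G e (gcomm G z w) \<in> N" and h2: "gcomm G (gcomm G e z) (gcomm G z w) \<in> N"
  shows "md G N (gcomm G e (inv w \<otimes> z \<otimes> w)) (gcomm G e z)"
proof -
  have "md G N (gcomm G e (gcomm G z w) \<otimes> (inv (gcomm G z w) \<otimes> gcomm G e z \<otimes> gcomm G z w)) (\<one> \<otimes> gcomm G e z)"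
    using md_mult[OF N md_N[OF N h1] md_conj[OF N _ _ h2]] c by simp
  then show ?thesis using comm_conj_arg c by simp
qed

lemma lcs_mono_mem: "x \<in> lcs G i \<Longrightarrow> j \<le> i \<Longrightarrow> x \<in> lcs G j"
  using lcs_anti by blast

lemma comm_lcs': "x \<in> lcs G i \<Longrightarrow> y \<in> lcs G j \<Longrightarrow> l \<le> i + j + 1 \<Longrightarrow> gcomm G x y \<in> lcs G l"
  using comm_lcs lcs_mono_mem by blast

lemma lcs_conj: "x \<in> lcs G i \<Longrightarrow> g \<in> carrier G \<Longrightarrow> inv g \<otimes> x \<otimes> g \<in> lcs G i"
  using normal.inv_op_closed1[OF lcs_normal] by blast

lemma jacobi:
  assumes x: "x \<in> lcs G p" and y: "y \<in> lcs G q" and z: "z \<in> lcs G r"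
    and V: "subgroup V G" "lcs G (p + q + r + 3) \<subseteq> V"
    and A: "gcomm G (gcomm G x z) y \<in> V" and B: "gcomm G (gcomm G y z) x \<in> V"
  shows "gcomm G (gcomm G x y) z \<in> V"
proof -
  let ?N = "lcs G (p + q + r + 3)"
  have N: "?N \<lhd> G" by (rule lcs_normal)
  have xc: "x \<in> carrier G" and yc: "y \<in> carrier G" and zc: "z \<in> carrier G" using x y z lcs_carrier by auto
  let ?E1 = "gcomm G (gcomm G x y) z" and ?E2 = "gcomm G (gcomm G z x) y" and ?E3 = "gcomm G (gcomm G y z) x"
  let ?A = "gcomm G (gcomm G x z) y"
  have m1: "md G ?N (gcomm G (gcomm G x y) (inv x \<otimes> z \<otimes> x)) ?E1"
    by (rule md_comm_conj_arg[OF N]) (use xc yc zc in simp,  use xc yc zc in simp, use xc yc zc in simp,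
        (rule comm_lcs'[OF comm_lcs[OF x y] comm_lcs[OF z x]]; simp),
        (rule comm_lcs'[OF comm_lcs[OF comm_lcs[OF x y] z] comm_lcs[OF z x]]; simp))
  have m2: "md G ?N (gcomm G (gcomm G z x) (inv z \<otimes> y \<otimes> z)) ?E2"
    by (rule md_comm_conj_arg[OF N]) (use xc yc zc in simp,  use xc yc zc in simp, use xc yc zc in simp,
        (rule comm_lcs'[OF comm_lcs[OF z x] comm_lcs[OF y z]]; simp),
        (rule comm_lcs'[OF comm_lcs[OF comm_lcs[OF z x] y] comm_lcs[OF y z]]; simp))
  have m3: "md G ?N (gcomm G (gcomm G y z) (inv y \<otimes> x \<otimes> y)) ?E3"
    by (rule md_comm_conj_arg[OF N]) (use xc yc zc in simp,  use xc yc zc in simp, use xc yc zc in simp,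
        (rule comm_lcs'[OF comm_lcs[OF y z] comm_lcs[OF x y]]; simp),
        (rule comm_lcs'[OF comm_lcs[OF comm_lcs[OF y z] x] comm_lcs[OF x y]]; simp))
  have e2: "?E2 = gcomm G x z \<otimes> inv ?A \<otimes> inv (gcomm G x z)"
    using gcomm_inv_l[of "gcomm G x z" y] gcomm_inv[of x z] xc yc zc by simp
  have m4: "md G ?N ?E2 (inv ?A)"
    unfolding e2
  proof (rule md_conj'[OF N])
    show "inv ?A \<in> carrier G" "gcomm G x z \<in> carrier G" using xc yc zc by simp_all
    show "gcomm G (inv ?A) (inv (gcomm G x z)) \<in> ?N"
      by (rule comm_lcs'[OF lcs_inv[OF comm_lcs[OF comm_lcs[OF x z] y]] lcs_inv[OF comm_lcs[OF x z]]]) simp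
  qed
  have hw: "gcomm G (gcomm G x y) (inv x \<otimes> z \<otimes> x) \<otimes> gcomm G (gcomm G z x) (inv z \<otimes> y \<otimes> z)
       \<otimes> gcomm G (gcomm G y z) (inv y \<otimes> x \<otimes> y) = \<one>"
    by (rule hall_witt[OF xc yc zc])
  have "md G ?N \<one> (?E1 \<otimes> inv ?A \<otimes> ?E3)"
    using md_mult[OF N md_mult[OF N m1 md_trans[OF N m2 m4]] m3] hw by simp
  then have P: "?E1 \<otimes> inv ?A \<otimes> ?E3 \<in> V"
    using md_V[OF V(1) V(2) md_sym[OF N]] subgroup.one_closed[OF V(1)] by blast
  have c: "?E1 \<in> carrier G" "?A \<in> carrier G" "?E3 \<in> carrier G" using xc yc zc by simp_all
  have "(?E1 \<otimes> inv ?A \<otimes> ?E3) \<otimes> inv ?E3 \<otimes> ?A \<in> V"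
    using P A B V(1) subgroup.m_closed subgroup.m_inv_closed by metis
  then show ?thesis using c by (simp add: m_assoc)
qed

end


context group begin

lemma bil_left:
  assumes z: "z \<in> lcs G r" and V: "subgroup V G" "lcs G (2*s+r+2) \<subseteq> V"
    and S: "S \<subseteq> lcs G s" and h: "\<forall>e\<in>S. gcomm G e z \<in> V"
    and g: "g \<in> generate G S"
  shows "gcomm G g z \<in> V"
proof -
  let ?N = "lcs G (2*s+r+2)"
  have N: "?N \<lhd> G" by (rule lcs_normal)
  have zc: "z \<in> carrier G" using z lcs_carrier by blast
  let ?A = "{g \<in> lcs G s. gcomm G g z \<in> V}"
  have sg: "subgroup ?A G"
  proof (rule subgroup.intro)
    show "?A \<subseteq> carrier G" using lcs_carrier by blast
  next
    fix a b assume a: "a \<in> ?A" and b: "b \<in> ?A"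
    have al: "a \<in> lcs G s" and bl: "b \<in> lcs G s" and aV: "gcomm G a z \<in> V" and bV: "gcomm G b z \<in> V"
      using a b by auto
    have ac: "a \<in> carrier G" and bc: "b \<in> carrier G" using al bl lcs_carrier by auto
    have "gcomm G (gcomm G a z) b \<in> ?N"
      by (rule comm_lcs'[OF comm_lcs[OF al z] bl]) simp
    then have "md G ?N (inv b \<otimes> gcomm G a z \<otimes> b) (gcomm G a z)"
      by (rule md_conj[OF N gcomm_closed[OF ac zc] bc])
    then have "inv b \<otimes> gcomm G a z \<otimes> b \<in> V" using md_V[OF V] aV by blast
    then have "(inv b \<otimes> gcomm G a z \<otimes> b) \<otimes> gcomm G b z \<in> V" using bV subgroup.m_closed[OF V(1)] by blast
    then have "gcomm G (a \<otimes> b) z \<in> V" by (simp only: gcomm_mult_l[OF ac bc zc])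
    then show "a \<otimes> b \<in> ?A" using lcs_mult[OF al bl] by blast
  next
    have "gcomm G \<one> z \<in> V" using gcomm_one_l[OF zc] subgroup.one_closed[OF V(1)] by simp
    then show "\<one> \<in> ?A" using subgroup.one_closed[OF lcs_subgroup] by blast
  next
    fix a assume a: "a \<in> ?A"
    have al: "a \<in> lcs G s" and aV: "gcomm G a z \<in> V" using a by auto
    have ac: "a \<in> carrier G" using al lcs_carrier by auto
    have "gcomm G (inv (gcomm G a z)) (inv a) \<in> ?N"
      by (rule comm_lcs'[OF lcs_inv[OF comm_lcs[OF al z]] lcs_inv[OF al]]) simp
    then have "md G ?N (a \<otimes> inv (gcomm G a z) \<otimes> inv a) (inv (gcomm G a z))"
      by (rule md_conj'[OF N inv_closed[OF gcomm_closed[OF ac zc]] ac])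
    moreover have "inv (gcomm G a z) \<in> V" using aV subgroup.m_inv_closed[OF V(1)] by blast
    ultimately have "a \<otimes> inv (gcomm G a z) \<otimes> inv a \<in> V" using md_V[OF V] by blast
    then have "gcomm G (inv a) z \<in> V" by (simp only: gcomm_inv_l[OF ac zc])
    then show "inv a \<in> ?A" using lcs_inv[OF al] by blast
  qed
  have "S \<subseteq> ?A" using S h by blast
  then have "generate G S \<subseteq> ?A" by (rule generate_subgroup_incl[OF _ sg])
  then show ?thesis using g by blast
qed

lemma bil_right:
  assumes e: "e \<in> lcs G s" and V: "subgroup V G" "lcs G (s+2*r+2) \<subseteq> V"
    and S: "S \<subseteq> lcs G r" and h: "\<forall>t\<in>S. gcomm G e t \<in> V"
    and g: "g \<in> generate G S"
  shows "gcomm G e g \<in> V"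
proof -
  have ec: "e \<in> carrier G" using e lcs_carrier by blast
  have Sc: "S \<subseteq> carrier G" using S lcs_sub by blast
  have h': "\<forall>t\<in>S. gcomm G t e \<in> V"
  proof
    fix t assume t: "t \<in> S"
    have tc: "t \<in> carrier G" using t Sc by blast
    have "inv (gcomm G e t) \<in> V" using h t subgroup.m_inv_closed[OF V(1)] by blast
    then show "gcomm G t e \<in> V" by (simp only: gcomm_inv[OF ec tc])
  qed
  have eq: "2*r+s+2 = s+2*r+2" by simp
  have V2: "lcs G (2*r+s+2) \<subseteq> V" unfolding eq by (rule V(2))
  have gc: "g \<in> carrier G" using generate_in_carrier[OF Sc g] .
  have "gcomm G g e \<in> V" by (rule bil_left[OF e V(1) V2 S h' g])
  then have "inv (gcomm G g e) \<in> V" using subgroup.m_inv_closed[OF V(1)] by blast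
  then show ?thesis by (simp only: gcomm_inv[OF gc ec])
qed

end


declare lcs.simps(2)[simp del]

lemma wt_pos: "wt c \<ge> 1"
  by (induction c) auto

lemma basic_finite: "finite {c. basic m lt c \<and> wt c \<le> w}"
proof (induction w)
  case 0
  have "wt c \<noteq> 0" for c using wt_pos[of c] by simp
  then have "{c. basic m lt c \<and> wt c \<le> 0} = {}" by auto
  then show ?case by (simp only: finite.emptyI)
next
  case (Suc w)
  let ?T = "{c. basic m lt c \<and> wt c \<le> w}"
  have "{c. basic m lt c \<and> wt c \<le> Suc w} \<subseteq> Gen ` {..<m} \<union> (\<lambda>(b,a). Br b a) ` (?T \<times> ?T)"
  proof
    fix c assume "c \<in> {c. basic m lt c \<and> wt c \<le> Suc w}"
    then have c: "basic m lt c" "wt c \<le> Suc w" by auto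
    from c(1) show "c \<in> Gen ` {..<m} \<union> (\<lambda>(b,a). Br b a) ` (?T \<times> ?T)"
    proof cases
      case (gen i) then show ?thesis by auto
    next
      case (br b a)
      have "wt b \<le> w" "wt a \<le> w" using c(2) br(1) wt_pos[of a] wt_pos[of b] by auto
      then have "(b, a) \<in> ?T \<times> ?T" using br by auto
      then have "Br b a \<in> (\<lambda>(b,a). Br b a) ` (?T \<times> ?T)" by (rule rev_image_eqI) simp
      then show ?thesis using br(1) by blast
    qed
  qed
  moreover have "finite (Gen ` {..<m} \<union> (\<lambda>(b,a). Br b a) ` (?T \<times> ?T))" using Suc by simp
  ultimately show ?case by (rule finite_subset)
qed

locale hall = group G for G (structure) +
  fixes x :: "nat \<Rightarrow> 'a" and m :: nat and lt :: "fcomm \<Rightarrow> fcomm \<Rightarrow> bool"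
  assumes xc: "\<And>i. i < m \<Longrightarrow> x i \<in> carrier G"
    and ao: "admissible_order m lt"
    and gens: "generate G (x ` {..<m}) = carrier G"
begin

lemma lt_irrefl: "\<not> lt a a" using ao by (simp add: admissible_order_def)
lemma lt_trans: "lt a b \<Longrightarrow> lt b c \<Longrightarrow> lt a c" using ao unfolding admissible_order_def by blast
lemma lt_total: "lt a b \<or> a = b \<or> lt b a" using ao unfolding admissible_order_def by blast
lemma lt_wt: "wt a < wt b \<Longrightarrow> lt a b" using ao unfolding admissible_order_def by blast
lemma lt_wt_le: assumes "lt a b" shows "wt a \<le> wt b"
proof (rule ccontr)
  assume "\<not> wt a \<le> wt b"
  then have "lt b a" using lt_wt[of b a] by simp
  then show False using lt_trans[OF assms] lt_irrefl[of a] by blast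
qed

abbreviation ev :: "fcomm \<Rightarrow> 'a" where "ev c \<equiv> fc_eval G x c"

lemma basic_ev: "basic m lt c \<Longrightarrow> ev c \<in> lcs G (wt c - 1)"
proof (induction rule: basic.induct)
  case (gen i) then show ?case using xc by (simp add: lcs.simps(1))
next
  case (br b a)
  have eq: "wt b - 1 + (wt a - 1) + 1 = wt (Br b a) - 1" using wt_pos[of a] wt_pos[of b] by simp
  show ?case unfolding eq[symmetric] fc_eval.simps by (rule comm_lcs[OF br.IH])
qed

lemma basic_ev_c: "basic m lt c \<Longrightarrow> ev c \<in> carrier G"
  using basic_ev lcs_carrier by blast

definition S :: "nat \<Rightarrow> 'a set" where "S w = ev ` {c. basic m lt c \<and> wt c = w}"
definition V :: "nat \<Rightarrow> 'a set" where "V w = generate G (S w \<union> lcs G w)"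

lemma S_sub: "S w \<subseteq> lcs G (w - 1)"
proof
  fix y assume "y \<in> S w"
  then obtain c where c: "y = ev c" "basic m lt c" "wt c = w" unfolding S_def by blast
  show "y \<in> lcs G (w - 1)" using basic_ev[OF c(2)] c(1,3) by simp
qed

lemma SV_sub: "S w \<union> lcs G w \<subseteq> lcs G (w - 1)"
proof -
  have "lcs G w \<subseteq> lcs G (w - 1)" by (rule lcs_anti) simp
  then show ?thesis using S_sub by (rule Un_least[OF _ , rotated])
qed

lemma SV_c: "S w \<union> lcs G w \<subseteq> carrier G"
  using SV_sub lcs_sub by (rule subset_trans)

lemma V_subgroup: "subgroup (V w) G"
  unfolding V_def by (rule generate_is_subgroup[OF SV_c])

lemma lcs_V: "lcs G w \<subseteq> V w"
  unfolding V_def by (rule subsetI, rule generate.incl, rule UnI2)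

lemma S_V: "S w \<subseteq> V w"
  unfolding V_def by (rule subsetI, rule generate.incl, rule UnI1)

lemma basic_S: "basic m lt c \<Longrightarrow> ev c \<in> S (wt c)"
  unfolding S_def by (rule imageI) simp

lemma basic_V: "basic m lt c \<Longrightarrow> ev c \<in> V (wt c)"
  using S_V basic_S by (rule subsetD)

lemma V_sub: "V w \<subseteq> lcs G (w - 1)"
  unfolding V_def by (rule generate_subgroup_incl[OF SV_sub lcs_subgroup])

end


inductive_cases basic_BrE: "basic m lt (Br b a)"

context hall begin

lemma basic_Br_parts: "basic m lt (Br b1 b2) \<Longrightarrow> basic m lt b1 \<and> basic m lt b2 \<and> lt b2 b1"
  by (erule basic_BrE) simp

lemma card_less:
  assumes fin: "finite T" and a': "a' \<in> T" and la: "lt a a'"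
  shows "card {c \<in> T. lt a' c} < card {c \<in> T. lt a c}"
proof (rule psubset_card_mono)
  show "finite {c \<in> T. lt a c}" using fin by simp
  have "{c \<in> T. lt a' c} \<subseteq> {c \<in> T. lt a c}" using lt_trans[OF la] by blast
  moreover have "a' \<in> {c \<in> T. lt a c}" using a' la by simp
  moreover have "a' \<notin> {c \<in> T. lt a' c}" using lt_irrefl by simp
  ultimately show "{c \<in> T. lt a' c} \<subset> {c \<in> T. lt a c}" by blast
qed

lemma V_inv_comm: "p \<in> carrier G \<Longrightarrow> q \<in> carrier G \<Longrightarrow> gcomm G q p \<in> V w \<Longrightarrow> gcomm G p q \<in> V w"
  using subgroup.m_inv_closed[OF V_subgroup] gcomm_inv by metis

lemma lcs_V_ge: "w \<le> l \<Longrightarrow> lcs G l \<subseteq> V w"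
  using lcs_anti[of w l] lcs_V[of w] by (rule subset_trans)

lemma hall_main:
  "\<forall>u v. basic m lt u \<longrightarrow> basic m lt v \<longrightarrow> wt u + wt v = w \<longrightarrow> gcomm G (ev u) (ev v) \<in> V w"
proof (induction w rule: less_induct)
  case (less w)
  note outerIH = less.IH
  define T where "T = {c. basic m lt c \<and> wt c \<le> w}"
  have finT: "finite T" unfolding T_def by (rule basic_finite)
  define P where "P a \<longleftrightarrow> (\<forall>b. basic m lt b \<longrightarrow> wt b + wt a = w \<longrightarrow> lt a b \<longrightarrow> gcomm G (ev b) (ev a) \<in> V w)" for a
  have inner: "\<forall>a. basic m lt a \<longrightarrow> card {c \<in> T. lt a c} = n \<longrightarrow> P a" for n
  proof (induction n rule: less_induct)
    case (less n)
    show ?case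
    proof (intro allI impI)
      fix a assume a: "basic m lt a" and n: "card {c\<in>T. lt a c} = n"
      have comb: "gcomm G (ev p) (ev q) \<in> V w"
        if p: "basic m lt p" and q: "basic m lt q" and pq: "wt p + wt q = w" and ap: "lt a p" and aq: "lt a q" for p q
      proof -
        have pc: "ev p \<in> carrier G" and qc: "ev q \<in> carrier G" using p q basic_ev_c by auto
        consider "lt q p" | "p = q" | "lt p q" using lt_total by blast
        then show ?thesis
        proof cases
          case 1
          have "q \<in> T" unfolding T_def using q pq by simp
          then have "card {c\<in>T. lt q c} < n" using card_less[OF finT _ aq] n by simp
          then have "P q" using less.IH q by blast
          then show ?thesis unfolding P_def using p pq 1 by blast
        next
          case 2
          then show ?thesis using gcomm_self[OF pc] subgroup.one_closed[OF V_subgroup] by simp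
        next
          case 3
          have "p \<in> T" unfolding T_def using p pq by simp
          then have "card {c\<in>T. lt p c} < n" using card_less[OF finT _ ap] n by simp
          then have "P p" using less.IH p by blast
          then have "gcomm G (ev q) (ev p) \<in> V w" unfolding P_def using q pq 3 by (simp add: add.commute)
          then show ?thesis by (rule V_inv_comm[OF pc qc])
        qed
      qed
      show "P a" unfolding P_def
      proof (intro allI impI)
        fix b assume b: "basic m lt b" and wba: "wt b + wt a = w" and ab: "lt a b"
        show "gcomm G (ev b) (ev a) \<in> V w"
        proof (cases "basic m lt (Br b a)")
          case True
          have "ev (Br b a) \<in> V (wt (Br b a))" by (rule basic_V[OF True])
          then show ?thesis using wba by simp
        next
          case False
          have "\<not> (\<forall>b1 b2. b = Br b1 b2 \<longrightarrow> (lt b2 a \<or> b2 = a))"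
            using False basic.br[OF b a ab] by blast
          then obtain b1 b2 where bb: "b = Br b1 b2" and nb: "\<not> (lt b2 a \<or> b2 = a)" by blast
          have ab2: "lt a b2" using nb lt_total[of a b2] by blast
          have bB: "basic m lt (Br b1 b2)" using b bb by simp
          have parts: "basic m lt b1" "basic m lt b2" "lt b2 b1" using basic_Br_parts[OF bB] by auto
          have ab1: "lt a b1" using lt_trans[OF ab2 parts(3)] .
          have wb: "wt b = wt b1 + wt b2" using bb by simp
          have w1pos: "wt b1 \<ge> 1" "wt b2 \<ge> 1" "wt a \<ge> 1" by (rule wt_pos)+
          have X: "ev b1 \<in> lcs G (wt b1 - 1)" using basic_ev[OF parts(1)] .
          have Y: "ev b2 \<in> lcs G (wt b2 - 1)" using basic_ev[OF parts(2)] .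
          have Z: "ev a \<in> lcs G (wt a - 1)" using basic_ev[OF a] .
          have Xc: "ev b1 \<in> carrier G" "ev b2 \<in> carrier G" "ev a \<in> carrier G" using X Y Z lcs_carrier by auto
          have Vw: "lcs G (wt b1 - 1 + (wt b2 - 1) + (wt a - 1) + 3) \<subseteq> V w"
            by (rule lcs_V_ge) (use wba wb w1pos in simp)
          have A: "gcomm G (gcomm G (ev b1) (ev a)) (ev b2) \<in> V w"
          proof -
            let ?w1 = "wt b1 + wt a"
            have "gcomm G (ev b1) (ev a) \<in> V ?w1"
              using outerIH[of ?w1] parts(1) a wba wb w1pos by simp
            then have g: "gcomm G (ev b1) (ev a) \<in> generate G (S ?w1 \<union> lcs G ?w1)" unfolding V_def .
            show ?thesis
            proof (rule bil_left[OF Y V_subgroup _ SV_sub _ g])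
              show "lcs G (2 * (?w1 - 1) + (wt b2 - 1) + 2) \<subseteq> V w"
                by (rule lcs_V_ge) (use wba wb w1pos in simp)
              show "\<forall>e\<in>S ?w1 \<union> lcs G ?w1. gcomm G e (ev b2) \<in> V w"
              proof
                fix e assume e: "e \<in> S ?w1 \<union> lcs G ?w1"
                then show "gcomm G e (ev b2) \<in> V w"
                proof
                  assume "e \<in> S ?w1"
                  then obtain d where d: "e = ev d" "basic m lt d" "wt d = ?w1" unfolding S_def by blast
                  have "lt a d" using lt_wt[of a d] d(3) w1pos by simp
                  then show ?thesis using comb[OF d(2) parts(2) _ _ ab2] d wba wb by simp
                next
                  assume "e \<in> lcs G ?w1"
                  then have "gcomm G e (ev b2) \<in> lcs G w"
                    by (rule comm_lcs'[OF _ Y]) (use wba wb w1pos in simp)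
                  then show ?thesis using lcs_V by blast
                qed
              qed
            qed
          qed
          have B: "gcomm G (gcomm G (ev b2) (ev a)) (ev b1) \<in> V w"
          proof -
            let ?w2 = "wt b2 + wt a"
            have "gcomm G (ev b2) (ev a) \<in> V ?w2"
              using outerIH[of ?w2] parts(2) a wba wb w1pos by simp
            then have g: "gcomm G (ev b2) (ev a) \<in> generate G (S ?w2 \<union> lcs G ?w2)" unfolding V_def .
            show ?thesis
            proof (rule bil_left[OF X V_subgroup _ SV_sub _ g])
              show "lcs G (2 * (?w2 - 1) + (wt b1 - 1) + 2) \<subseteq> V w"
                by (rule lcs_V_ge) (use wba wb w1pos in simp)
              show "\<forall>e\<in>S ?w2 \<union> lcs G ?w2. gcomm G e (ev b1) \<in> V w"
              proof
                fix e assume e: "e \<in> S ?w2 \<union> lcs G ?w2"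
                then show "gcomm G e (ev b1) \<in> V w"
                proof
                  assume "e \<in> S ?w2"
                  then obtain d where d: "e = ev d" "basic m lt d" "wt d = ?w2" unfolding S_def by blast
                  have "lt a d" using lt_wt[of a d] d(3) w1pos by simp
                  then show ?thesis using comb[OF d(2) parts(1) _ _ ab1] d wba wb by simp
                next
                  assume "e \<in> lcs G ?w2"
                  then have "gcomm G e (ev b1) \<in> lcs G w"
                    by (rule comm_lcs'[OF _ X]) (use wba wb w1pos in simp)
                  then show ?thesis using lcs_V by blast
                qed
              qed
            qed
          qed
          have "gcomm G (gcomm G (ev b1) (ev b2)) (ev a) \<in> V w"
            by (rule jacobi[OF X Y Z V_subgroup Vw A B])
          then show ?thesis using bb by simp
        qed
      qed
    qed
  qed
  show ?case
  proof (intro allI impI)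
    fix u v assume u: "basic m lt u" and v: "basic m lt v" and uv: "wt u + wt v = w"
    have uc: "ev u \<in> carrier G" and vc: "ev v \<in> carrier G" using u v basic_ev_c by auto
    consider "lt v u" | "u = v" | "lt u v" using lt_total by blast
    then show "gcomm G (ev u) (ev v) \<in> V w"
    proof cases
      case 1
      have "P v" using inner v by blast
      then show ?thesis unfolding P_def using u uv 1 by blast
    next
      case 2
      then show ?thesis using gcomm_self[OF uc] subgroup.one_closed[OF V_subgroup] by simp
    next
      case 3
      have "P u" using inner u by blast
      then have "gcomm G (ev v) (ev u) \<in> V w" unfolding P_def using v uv 3 by (simp add: add.commute)
      then show ?thesis by (rule V_inv_comm[OF uc vc])
    qed
  qed
qed

end


context group begin

lemma setmult_gen:
  assumes H: "subgroup H G" and N: "N \<lhd> G"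
  shows "H <#> N = generate G (H \<union> N)"
proof
  have Hc: "H \<subseteq> carrier G" using subgroup.subset[OF H] .
  have Nc: "N \<subseteq> carrier G" using subgroup.subset[OF normal_imp_subgroup[OF N]] .
  show "H <#> N \<subseteq> generate G (H \<union> N)"
  proof
    fix y assume "y \<in> H <#> N"
    then obtain h n where hn: "h \<in> H" "n \<in> N" "y = h \<otimes> n" unfolding set_mult_def by blast
    have "h \<in> generate G (H \<union> N)" using hn(1) by (intro generate.incl) (rule UnI1)
    moreover have "n \<in> generate G (H \<union> N)" using hn(2) by (intro generate.incl) (rule UnI2)
    ultimately show "y \<in> generate G (H \<union> N)" unfolding hn(3) by (rule generate.eng)
  qed
  have sg: "subgroup (N <#> H) G"
    by (rule second_isomorphism_grp.normal_set_mult_subgroup)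
       (simp add: second_isomorphism_grp_def second_isomorphism_grp_axioms_def N H)
  have eq: "H <#> N = N <#> H" by (rule commut_normal[OF H N])
  have "H \<union> N \<subseteq> H <#> N"
  proof
    fix y assume "y \<in> H \<union> N"
    then show "y \<in> H <#> N"
    proof
      assume y: "y \<in> H"
      have yc: "y \<in> carrier G" using y Hc by blast
      have "y \<otimes> \<one> \<in> H <#> N" unfolding set_mult_def using y subgroup.one_closed[OF normal_imp_subgroup[OF N]] by blast
      then show ?thesis using yc by simp
    next
      assume y: "y \<in> N"
      have yc: "y \<in> carrier G" using y Nc by blast
      have "\<one> \<otimes> y \<in> H <#> N" unfolding set_mult_def using y subgroup.one_closed[OF H] by blast
      then show ?thesis using yc by simp
    qed
  qed
  then show "generate G (H \<union> N) \<subseteq> H <#> N"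
    using generate_subgroup_incl sg eq by metis
qed

end

context hall begin

lemma span: "lcs G j \<subseteq> V (Suc j)"
proof (induction j)
  case 0
  have "x ` {..<m} \<subseteq> V 1"
  proof
    fix y assume "y \<in> x ` {..<m}"
    then obtain i where i: "i < m" "y = x i" by blast
    have "basic m lt (Gen i)" using i(1) by (rule basic.gen)
    then have "ev (Gen i) \<in> V (wt (Gen i))" by (rule basic_V)
    then show "y \<in> V 1" using i by simp
  qed
  then have "generate G (x ` {..<m}) \<subseteq> V 1" by (rule generate_subgroup_incl[OF _ V_subgroup])
  then show ?case using gens by (simp add: lcs.simps(1))
next
  case (Suc j)
  have "{gcomm G h k' |h k'. h \<in> lcs G j \<and> k' \<in> carrier G} \<subseteq> V (Suc (Suc j))"
  proof safe
    fix g y assume g0: "g \<in> lcs G j" and y: "y \<in> carrier G"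
    have g: "g \<in> generate G (S (Suc j) \<union> lcs G (Suc j))" using Suc g0 unfolding V_def by blast
    have y0: "y \<in> lcs G 0" using y by (simp add: lcs.simps(1))
    show "gcomm G g y \<in> V (Suc (Suc j))"
    proof (rule bil_left[OF y0 V_subgroup _ _ _ g])
      show "lcs G (2 * j + 0 + 2) \<subseteq> V (Suc (Suc j))" by (rule lcs_V_ge) simp
      show "S (Suc j) \<union> lcs G (Suc j) \<subseteq> lcs G j" using SV_sub[of "Suc j"] by simp
      show "\<forall>e\<in>S (Suc j) \<union> lcs G (Suc j). gcomm G e y \<in> V (Suc (Suc j))"
      proof
        fix e assume "e \<in> S (Suc j) \<union> lcs G (Suc j)"
        then show "gcomm G e y \<in> V (Suc (Suc j))"
        proof
          assume "e \<in> S (Suc j)"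
          then obtain c where c: "e = ev c" "basic m lt c" "wt c = Suc j" unfolding S_def by blast
          have ec: "ev c \<in> lcs G j" using basic_ev[OF c(2)] c(3) by simp
          have yg: "y \<in> generate G (x ` {..<m})" using y gens by simp
          have "gcomm G (ev c) y \<in> V (Suc (Suc j))"
          proof (rule bil_right[OF ec V_subgroup _ _ _ yg])
            show "lcs G (j + 2 * 0 + 2) \<subseteq> V (Suc (Suc j))" by (rule lcs_V_ge) simp
            show "x ` {..<m} \<subseteq> lcs G 0" using xc by (auto simp: lcs.simps(1))
            show "\<forall>t\<in>x ` {..<m}. gcomm G (ev c) t \<in> V (Suc (Suc j))"
            proof
              fix t assume "t \<in> x ` {..<m}"
              then obtain i where i: "i < m" "t = x i" by blast
              have bi: "basic m lt (Gen i)" using i(1) by (rule basic.gen)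
              have "gcomm G (ev c) (ev (Gen i)) \<in> V (Suc (Suc j))"
                using hall_main[of "Suc (Suc j)", rule_format, OF c(2) bi] c(3) by simp
              then show "gcomm G (ev c) t \<in> V (Suc (Suc j))" using i by simp
            qed
          qed
          then show ?thesis using c by simp
        next
          assume e: "e \<in> lcs G (Suc j)"
          have "gcomm G e y \<in> lcs G (Suc j + 0 + 1)" by (rule comm_lcs[OF e y0])
          then show ?thesis using lcs_V by auto
        qed
      qed
    qed
  qed
  then show ?case unfolding lcs.simps(2) comm_subgroup_def by (rule generate_subgroup_incl[OF _ V_subgroup])
qed

definition B :: "nat \<Rightarrow> nat \<Rightarrow> 'a set" where
  "B i j = ev ` {c. basic m lt c \<and> i \<le> wt c \<and> wt c \<le> j}"

lemma B_c: "B i j \<subseteq> carrier G"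
  unfolding B_def using basic_ev_c by blast

lemma B_sub: "1 \<le> i \<Longrightarrow> B i j \<subseteq> lcs G (i - 1)"
proof
  fix y assume i: "1 \<le> i" and "y \<in> B i j"
  then obtain c where c: "y = ev c" "basic m lt c" "i \<le> wt c" unfolding B_def by blast
  have "ev c \<in> lcs G (wt c - 1)" by (rule basic_ev[OF c(2)])
  moreover have "lcs G (wt c - 1) \<subseteq> lcs G (i - 1)" by (rule lcs_anti) (use c(3) in simp)
  ultimately show "y \<in> lcs G (i - 1)" using c(1) by blast
qed

lemma iter: "lcs G i \<subseteq> generate G (B (Suc i) (i + d) \<union> lcs G (i + d))"
proof (induction d)
  case 0
  show ?case using generate.incl[of _ "B (Suc i) (i + 0) \<union> lcs G (i + 0)" G] by auto
next
  case (Suc d)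
  let ?Gt = "generate G (B (Suc i) (i + Suc d) \<union> lcs G (i + Suc d))"
  have sgt: "subgroup ?Gt G"
    by (rule generate_is_subgroup) (use B_c lcs_sub in blast)
  have "B (Suc i) (i + d) \<subseteq> B (Suc i) (i + Suc d)" unfolding B_def by auto
  then have s1: "B (Suc i) (i + d) \<subseteq> ?Gt" using generate.incl[of _ "B (Suc i) (i + Suc d) \<union> lcs G (i + Suc d)" G] by blast
  have "S (Suc (i + d)) \<subseteq> B (Suc i) (i + Suc d)" unfolding S_def B_def by auto
  then have "V (Suc (i + d)) \<subseteq> ?Gt" unfolding V_def by (intro mono_generate) auto
  then have s2: "lcs G (i + d) \<subseteq> ?Gt" using span[of "i + d"] by blast
  have "generate G (B (Suc i) (i + d) \<union> lcs G (i + d)) \<subseteq> ?Gt"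
    by (rule generate_subgroup_incl[OF _ sgt]) (use s1 s2 in blast)
  then show ?case using Suc by blast
qed

end

theorem lemma2p5:
  fixes F :: "('g, 'b) monoid_scheme" and x :: "nat \<Rightarrow> 'g"
    and m n k :: nat and lt :: "fcomm \<Rightarrow> fcomm \<Rightarrow> bool"
  assumes "free_group_on F x m"
    and "admissible_order m lt"
    and "n \<ge> 1" and "k \<ge> 1" and "k \<ge> n - 1"
  defines "W \<equiv> {Br b a | b a. basic m lt b \<and> basic m lt a \<and> lt a b \<and>
                 wt b \<ge> k + n + 1 \<and> wt a \<ge> k + 1 \<and> wt b + wt a \<le> 2 * k + 2 * n + 1}"
  shows "comm_subgroup F (gamma F (k + n + 1)) (gamma F (k + 1)) <#>\<^bsub>F\<^esub> gamma F (2*k + 2*n + 2)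
       = generate F (fc_eval F x ` W) <#>\<^bsub>F\<^esub> gamma F (2*k + 2*n + 2)"
proof -
  have grp: "group F" and xs: "x ` {..<m} \<subseteq> carrier F" and gen: "generate F (x ` {..<m}) = carrier F"
    using assms(1) unfolding free_group_on_def by auto
  interpret hall F x m lt
    by (rule hall.intro[OF grp], rule hall_axioms.intro) (use xs gen assms(2) in auto)
  have g1: "gamma F (k + n + 1) = lcs F (k + n)" unfolding gamma_def by simp
  have g2: "gamma F (k + 1) = lcs F k" unfolding gamma_def by simp
  have g3: "gamma F (2*k + 2*n + 2) = lcs F (2*k + 2*n + 1)" unfolding gamma_def by simp
  let ?N = "lcs F (2*k + 2*n + 1)"
  let ?C = "comm_subgroup F (lcs F (k + n)) (lcs F k)"
  let ?E = "ev ` W"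
  let ?R = "generate F (?E \<union> ?N)"
  have Ec: "?E \<subseteq> carrier F"
    unfolding W_def using basic_ev_c basic.br by auto
  have Rsg: "subgroup ?R F" by (rule generate_is_subgroup) (use Ec lcs_sub in blast)
  have NR: "?N \<subseteq> ?R" using generate.incl[of _ "?E \<union> ?N" F] by blast
  have ER: "?E \<subseteq> ?R" using generate.incl[of _ "?E \<union> ?N" F] by blast
  have N_ge: "lcs F l \<subseteq> ?R" if "2*k + 2*n + 1 \<le> l" for l
    using lcs_anti[OF that] NR by blast
  have EC: "?E \<subseteq> ?C"
  proof
    fix y assume "y \<in> ?E"
    then obtain b a where ba: "y = ev (Br b a)" "basic m lt b" "basic m lt a" "wt b \<ge> k + n + 1" "wt a \<ge> k + 1"
      unfolding W_def by blast
    have "ev b \<in> lcs F (wt b - 1)" by (rule basic_ev[OF ba(2)])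
    moreover have "lcs F (wt b - 1) \<subseteq> lcs F (k + n)" by (rule lcs_anti) (use ba(4) in simp)
    ultimately have b: "ev b \<in> lcs F (k + n)" by blast
    have "ev a \<in> lcs F (wt a - 1)" by (rule basic_ev[OF ba(3)])
    moreover have "lcs F (wt a - 1) \<subseteq> lcs F k" by (rule lcs_anti) (use ba(5) in simp)
    ultimately have a: "ev a \<in> lcs F k" by blast
    show "y \<in> ?C" using comm_subgroup_incl[OF b a] ba(1) by simp
  qed
  have pair: "gcomm F (ev c) t \<in> ?R"
    if c: "basic m lt c" "k + n + 1 \<le> wt c" "wt c \<le> k + 2 * n" and t: "t \<in> lcs F k" for c t
  proof -
    let ?wc = "wt c"
    have ec: "ev c \<in> lcs F (?wc - 1)" by (rule basic_ev[OF c(1)])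
    have ecc: "ev c \<in> carrier F" using basic_ev_c[OF c(1)] .
    have th: "t \<in> generate F (B (Suc k) (k + (k + 2*n + 1 - ?wc)) \<union> lcs F (k + (k + 2*n + 1 - ?wc)))"
      using iter[of k "k + 2*n + 1 - ?wc"] t by blast
    show ?thesis
    proof (rule bil_right[OF ec Rsg _ _ _ th])
      show "lcs F (?wc - 1 + 2 * k + 2) \<subseteq> ?R" by (rule N_ge) (use c(2) assms(5) in simp)
      show "B (Suc k) (k + (k + 2*n + 1 - ?wc)) \<union> lcs F (k + (k + 2*n + 1 - ?wc)) \<subseteq> lcs F k"
        using B_sub[of "Suc k"] lcs_anti[of k "k + (k + 2*n + 1 - ?wc)"] by auto
      show "\<forall>t\<in>B (Suc k) (k + (k + 2*n + 1 - ?wc)) \<union> lcs F (k + (k + 2*n + 1 - ?wc)). gcomm F (ev c) t \<in> ?R"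
      proof
        fix t assume "t \<in> B (Suc k) (k + (k + 2*n + 1 - ?wc)) \<union> lcs F (k + (k + 2*n + 1 - ?wc))"
        then show "gcomm F (ev c) t \<in> ?R"
        proof
          assume "t \<in> B (Suc k) (k + (k + 2*n + 1 - ?wc))"
          then obtain d where d: "t = ev d" "basic m lt d" "Suc k \<le> wt d" "wt d \<le> k + (k + 2*n + 1 - ?wc)"
            unfolding B_def by blast
          have dc: "ev d \<in> carrier F" using basic_ev_c[OF d(2)] .
          consider "lt d c" | "d = c" | "lt c d" using lt_total by blast
          then show ?thesis
          proof cases
            case 1
            have "Br c d \<in> W" unfolding W_def using c d 1 by auto
            then have "ev (Br c d) \<in> ?R" using ER by blast
            then show ?thesis using d(1) by simp
          next
            case 2
            then show ?thesis using gcomm_self[OF ecc] subgroup.one_closed[OF Rsg] d(1) by simp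
          next
            case 3
            have "wt c \<le> wt d" by (rule lt_wt_le[OF 3])
            then have "Br d c \<in> W" unfolding W_def using c d 3 by auto
            then have "ev (Br d c) \<in> ?R" using ER by blast
            then have "gcomm F (ev d) (ev c) \<in> ?R" by simp
            then have "inv\<^bsub>F\<^esub> (gcomm F (ev d) (ev c)) \<in> ?R" by (rule subgroup.m_inv_closed[OF Rsg])
            then show ?thesis using gcomm_inv[OF dc ecc] d(1) by simp
          qed
        next
          assume t: "t \<in> lcs F (k + (k + 2*n + 1 - ?wc))"
          have "gcomm F (ev c) t \<in> lcs F (?wc - 1 + (k + (k + 2*n + 1 - ?wc)) + 1)" by (rule comm_lcs[OF ec t])
          moreover have "lcs F (?wc - 1 + (k + (k + 2*n + 1 - ?wc)) + 1) \<subseteq> ?R"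
            by (rule N_ge) (use c wt_pos[of c] in simp)
          ultimately show ?thesis by blast
        qed
      qed
    qed
  qed
  have CR: "?C \<subseteq> ?R"
    unfolding comm_subgroup_def
  proof (rule generate_subgroup_incl[OF _ Rsg], safe)
    fix g h assume g0: "g \<in> lcs F (k + n)" and h: "h \<in> lcs F k"
    have g: "g \<in> generate F (B (Suc (k + n)) (k + n + n) \<union> lcs F (k + n + n))"
      using iter[of "k + n" n] g0 by blast
    show "gcomm F g h \<in> ?R"
    proof (rule bil_left[OF h Rsg _ _ _ g])
      show "lcs F (2 * (k + n) + k + 2) \<subseteq> ?R" by (rule N_ge) simp
      show "B (Suc (k + n)) (k + n + n) \<union> lcs F (k + n + n) \<subseteq> lcs F (k + n)"
        using B_sub[of "Suc (k + n)"] lcs_anti[of "k + n" "k + n + n"] by auto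
      show "\<forall>e\<in>B (Suc (k + n)) (k + n + n) \<union> lcs F (k + n + n). gcomm F e h \<in> ?R"
      proof
        fix e assume "e \<in> B (Suc (k + n)) (k + n + n) \<union> lcs F (k + n + n)"
        then show "gcomm F e h \<in> ?R"
        proof
          assume "e \<in> B (Suc (k + n)) (k + n + n)"
          then obtain c where c: "e = ev c" "basic m lt c" "Suc (k + n) \<le> wt c" "wt c \<le> k + n + n"
            unfolding B_def by blast
          show ?thesis using pair[OF c(2) _ _ h] c by simp
        next
          assume e: "e \<in> lcs F (k + n + n)"
          have "gcomm F e h \<in> lcs F (k + n + n + k + 1)" by (rule comm_lcs[OF e h])
          moreover have "lcs F (k + n + n + k + 1) \<subseteq> ?R" by (rule N_ge) simp
          ultimately show ?thesis by blast
        qed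
      qed
    qed
  qed
  have Csg: "subgroup ?C F" by (rule comm_subgroup_subgroup[OF lcs_sub lcs_sub])
  have Esub: "subgroup (generate F ?E) F" by (rule generate_is_subgroup[OF Ec])
  have Nn: "?N \<lhd> F" by (rule lcs_normal)
  have L: "?C <#>\<^bsub>F\<^esub> ?N = ?R"
  proof -
    have "?C <#>\<^bsub>F\<^esub> ?N = generate F (?C \<union> ?N)" by (rule setmult_gen[OF Csg Nn])
    also have "\<dots> = ?R"
    proof
      show "generate F (?C \<union> ?N) \<subseteq> ?R" by (rule generate_subgroup_incl[OF _ Rsg]) (use CR NR in blast)
      show "?R \<subseteq> generate F (?C \<union> ?N)" by (rule mono_generate) (use EC in blast)
    qed
    finally show ?thesis .
  qed
  have Rr: "generate F ?E <#>\<^bsub>F\<^esub> ?N = ?R"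
  proof -
    have "generate F ?E <#>\<^bsub>F\<^esub> ?N = generate F (generate F ?E \<union> ?N)" by (rule setmult_gen[OF Esub Nn])
    also have "\<dots> = ?R"
    proof
      have GE: "generate F ?E \<subseteq> ?R" by (rule mono_generate) blast
      show "generate F (generate F ?E \<union> ?N) \<subseteq> ?R" by (rule generate_subgroup_incl[OF _ Rsg]) (use GE NR in blast)
      have "?E \<subseteq> generate F ?E" using generate.incl[of _ ?E F] by blast
      then show "?R \<subseteq> generate F (generate F ?E \<union> ?N)" by (intro mono_generate) blast
    qed
    finally show ?thesis .
  qed
  show ?thesis unfolding g1 g2 g3 using L Rr by simp
qed


end
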